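(* Let $q$ be an odd prime power, $d\ge 2$ an even integer, and $A\subset\mathbb F_q^d$. Let $\mathcal{SQ}(A)$ be the number of pairs $(x,y)\in A\times A$ such that $\eta(\|x-y\|)=1$. Then $$\mathcal{SQ}(A)\le \frac{|A|^2}{2}+\frac{q^{\frac d2}}{2}|A|-\frac{|A|^2}{2q^{\frac d2}}-\frac{|A|}{2}.$$
   Context: For $x,y\in\mathbb F_q^d$, $\|x-y\|:=(x_1-y_1)^2+\cdots+(x_d-y_d)^2\in\mathbb F_q$. $\eta$ denotes the quadratic character of $\mathbb F_q$ with the convention $\eta(0)=0$. *)

theory Defs
  imports "HOL-Analysis.Finite_Cartesian_Product"
begin

definition qchar :: "'a::{field,finite} \<Rightarrow> int" where
  "qchar a = (if a = 0 then 0 else if (\<exists>b. b * b = a) then 1 else -1)"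

definition qdist :: "'a::{field,finite} ^ 'n \<Rightarrow> 'a ^ 'n \<Rightarrow> 'a" where
  "qdist x y = (\<Sum>i\<in>UNIV. (x $ i - y $ i)^2)"

definition SQ :: "('a::{field,finite} ^ 'n) set \<Rightarrow> nat" where
  "SQ A = card {(x, y). x \<in> A \<and> y \<in> A \<and> qchar (qdist x y) = 1}"

end

theory Submission
  imports Defs "HOL-Computational_Algebra.Primes"
begin


lemma of_nat_card_eq_0: "of_nat CARD('a::{field,finite}) = (0::'a)"
proof -
  have "(\<Sum>x\<in>(UNIV::'a set). x + 1) = (\<Sum>x\<in>UNIV. x)"
    by (rule sum.reindex_bij_witness[of _ "\<lambda>x. x - 1" "\<lambda>x. x + 1"]) auto
  hence "(\<Sum>x\<in>(UNIV::'a set). x) + of_nat CARD('a) = (\<Sum>x\<in>UNIV. x)"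
    by (simp add: sum.distrib)
  thus ?thesis by simp
qed

lemma two_ne_0: assumes "odd CARD('a::{field,finite})" shows "(2::'a) \<noteq> 0"
proof
  assume h: "(2::'a) = 0"
  from assms obtain k where k: "CARD('a) = 2*k+1" by (metis oddE)
  have "(0::'a) = of_nat (2*k+1)" using of_nat_card_eq_0[where 'a='a] k by simp
  also have "... = 2 * of_nat k + 1" by simp
  also have "... = 1" using h by simp
  finally show False by simp
qed

lemma sum_fiber:
  fixes h :: "'b::finite \<Rightarrow> 'c::finite" and F :: "'c \<Rightarrow> 'r::comm_ring_1"
  shows "(\<Sum>x\<in>UNIV. F (h x)) = (\<Sum>t\<in>UNIV. of_nat (card {x. h x = t}) * F t)"
proof -
  have "(\<Sum>x\<in>UNIV. F (h x)) = (\<Sum>x\<in>UNIV. \<Sum>t\<in>UNIV. if h x = t then F t else 0)"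
    by simp
  also have "... = (\<Sum>t\<in>UNIV. \<Sum>x\<in>UNIV. if h x = t then F t else 0)"
    by (rule sum.swap)
  also have "... = (\<Sum>t\<in>UNIV. of_nat (card {x. h x = t}) * F t)"
  proof (rule sum.cong[OF refl])
    fix t
    have "(\<Sum>x\<in>UNIV. if h x = t then F t else 0) = (\<Sum>x\<in>{x. h x = t}. F t)"
      by (simp add: sum.inter_filter[symmetric])
    thus "(\<Sum>x\<in>UNIV. if h x = t then F t else 0) = of_nat (card {x. h x = t}) * F t"
      by simp
  qed
  finally show ?thesis .
qed

lemma qchar_cases: "qchar a = 0 \<or> qchar a = 1 \<or> qchar a = -1"
  by (simp add: qchar_def)

lemma qchar_0 [simp]: "qchar 0 = 0" by (simp add: qchar_def)

lemma qchar_1 [simp]: "qchar 1 = 1"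
  unfolding qchar_def by (metis mult_1 zero_neq_one)

lemma qchar_eq_1: "qchar s = 1 \<longleftrightarrow> s \<noteq> 0 \<and> (\<exists>b. b*b = s)"
  by (simp add: qchar_def)

lemma qchar_eq_m1: "qchar s = -1 \<longleftrightarrow> s \<noteq> 0 \<and> \<not>(\<exists>b. b*b = s)"
  by (simp add: qchar_def)

lemma qchar_nz: "x \<noteq> 0 \<Longrightarrow> qchar x = 1 \<or> qchar x = -1"
  by (simp add: qchar_def)

lemma qchar_sq: "b \<noteq> 0 \<Longrightarrow> qchar (b*b) = 1" by (auto simp: qchar_def)

lemma card_sqrt:
  fixes t :: "'a::{field,finite}"
  assumes "odd CARD('a)"
  shows "int (card {w. w*w = t}) = 1 + qchar t"
proof (cases "t = 0")
  case True
  hence "{w. w*w = t} = {0}" by auto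
  thus ?thesis using True by simp
next
  case False
  show ?thesis
  proof (cases "\<exists>b. b*b = t")
    case True
    then obtain b where b: "b*b = t" by blast
    have "b \<noteq> 0" using b False by auto
    have "b \<noteq> -b"
    proof
      assume "b = -b"
      hence "b + b = 0" by (metis eq_neg_iff_add_eq_0)
      hence "2 * b = 0" by (metis mult_2)
      thus False using two_ne_0[OF assms] \<open>b \<noteq> 0\<close> by simp
    qed
    have iff: "w*w = t \<longleftrightarrow> w = b \<or> w = -b" for w
    proof -
      have "w*w = t \<longleftrightarrow> (w - b) * (w + b) = 0"
        unfolding b[symmetric] by (simp add: algebra_simps)
      also have "... \<longleftrightarrow> w = b \<or> w = -b"
        by (metis mult_eq_0_iff right_minus_eq add_eq_0_iff2)
      finally show ?thesis .
    qed
    have "{w. w*w = t} = {b, -b}" using iff by blast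
    moreover have "qchar t = 1" using True False by (simp add: qchar_eq_1)
    ultimately show ?thesis using \<open>b \<noteq> -b\<close> by simp
  next
    case nt: False
    hence "{w. w*w = t} = {}" by auto
    moreover have "qchar t = -1" using nt False by (simp add: qchar_eq_m1)
    ultimately show ?thesis by simp
  qed
qed
lemma sum_qchar:
  assumes "odd CARD('a::{field,finite})"
  shows "(\<Sum>t\<in>(UNIV::'a set). qchar t) = 0"
proof -
  have "int CARD('a) = (\<Sum>w\<in>(UNIV::'a set). (1::int))" by simp
  also have "... = (\<Sum>t\<in>(UNIV::'a set). of_nat (card {w::'a. w*w = t}) * 1)"
    by (rule sum_fiber)
  also have "... = (\<Sum>t\<in>(UNIV::'a set). 1 + qchar t)"
    using card_sqrt[OF assms] by simp
  also have "... = int CARD('a) + (\<Sum>t\<in>(UNIV::'a set). qchar t)"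
    by (simp add: sum.distrib)
  finally show ?thesis by simp
qed

lemma card_sq_nsq:
  assumes "odd CARD('a::{field,finite})"
  shows "card {t::'a. qchar t = 1} = card {t::'a. qchar t = -1}"
proof -
  have "(\<Sum>t\<in>(UNIV::'a set). qchar t) =
        (\<Sum>t\<in>(UNIV::'a set). (if qchar t = 1 then 1 else 0) - (if qchar t = -1 then 1 else 0))"
    by (rule sum.cong) (use qchar_cases in auto)
  also have "... = int (card {t::'a. qchar t = 1}) - int (card {t::'a. qchar t = -1})"
    by (simp add: sum_subtractf sum.inter_filter[symmetric])
  finally show ?thesis using sum_qchar[OF assms] by simp
qed

lemma div_sq_aux:
  fixes c d u :: "'a::field"
  assumes "c \<noteq> 0" "d*d = u*(c*c)"
  shows "(d/c)*(d/c) = u"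
proof -
  have "(d/c)*(d/c) = (d*d)/(c*c)" by simp
  also have "... = u" using assms by simp
  finally show ?thesis .
qed

lemma qchar_mult:
  fixes a b :: "'a::{field,finite}"
  assumes odd: "odd CARD('a)"
  shows "qchar (a*b) = qchar a * qchar b"
proof -
  have nsq_nsq: "qchar (n*m) = 1" if n: "qchar n = -1" and m: "qchar m = -1" for n m :: 'a
  proof -
    have n0: "n \<noteq> 0" using n by auto
    define S where "S = {t::'a. qchar t = 1}"
    define N where "N = {t::'a. qchar t = -1}"
    have sub: "(\<lambda>s. n * s) ` S \<subseteq> N"
    proof
      fix x assume "x \<in> (\<lambda>s. n * s) ` S"
      then obtain s where s: "qchar s = 1" "x = n * s" by (auto simp: S_def)
      have s0: "s \<noteq> 0" using s by auto
      obtain c where c: "c*c = s" using s(1) unfolding qchar_eq_1 by blast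
      have "\<not> (\<exists>d. d*d = x)"
      proof
        assume "\<exists>d. d*d = x"
        then obtain d where "d*d = x" by blast
        hence "(d/c)*(d/c) = n" using s c s0
          by (intro div_sq_aux) auto
        thus False using n unfolding qchar_eq_m1 by blast
      qed
      moreover have "x \<noteq> 0" using s0 n0 s by auto
      ultimately show "x \<in> N" by (simp add: qchar_def N_def)
    qed
    have "inj_on (\<lambda>s. n * s) S" using n0 by (auto intro: inj_onI)
    hence "card ((\<lambda>s. n * s) ` S) = card N"
      using card_sq_nsq[OF odd] by (simp add: card_image S_def N_def)
    hence "(\<lambda>s. n * s) ` S = N"
      using sub by (intro card_subset_eq) auto
    hence "m \<in> (\<lambda>s. n * s) ` S" using m by (auto simp: N_def)
    then obtain s where s: "qchar s = 1" "m = n * s" by (auto simp: S_def)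
    obtain c where c: "c*c = s" "s \<noteq> 0" using s(1) unfolding qchar_eq_1 by blast
    have "(n*c)*(n*c) = n*m" using s c by (simp add: algebra_simps)
    moreover have "n*c \<noteq> 0" using n0 c by auto
    ultimately show ?thesis using qchar_sq by metis
  qed
  show ?thesis
  proof (cases "a = 0 \<or> b = 0")
    case True thus ?thesis by auto
  next
    case False
    hence a0: "a \<noteq> 0" and b0: "b \<noteq> 0" by auto
    consider "qchar a = 1" "qchar b = 1" | "qchar a = 1" "qchar b = -1"
      | "qchar a = -1" "qchar b = 1" | "qchar a = -1" "qchar b = -1"
      using qchar_nz[OF a0] qchar_nz[OF b0] by blast
    thus ?thesis
    proof cases
      case 1
      then obtain c d where "c*c = a" "d*d = b" unfolding qchar_eq_1 by blast
      hence "(c * d)*(c * d) = a*b" by (simp add: algebra_simps)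
      moreover have "c * d \<noteq> 0" using \<open>c*c=a\<close> \<open>d*d=b\<close> a0 b0 by auto
      ultimately have "qchar (a*b) = 1" using qchar_sq by metis
      thus ?thesis using 1 by simp
    next
      case 2
      then obtain c where c: "c*c = a" unfolding qchar_eq_1 by blast
      have "\<not>(\<exists>d. d*d = a*b)"
      proof
        assume "\<exists>d. d*d = a*b"
        then obtain d where "d*d = a*b" by blast
        hence "(d/c)*(d/c) = b" using c a0 by (intro div_sq_aux) (auto simp: mult.commute)
        thus False using 2 unfolding qchar_eq_m1 by blast
      qed
      hence "qchar (a*b) = -1" using a0 b0 unfolding qchar_eq_m1 by simp
      thus ?thesis using 2 by simp
    next
      case 3
      then obtain c where c: "c*c = b" unfolding qchar_eq_1 by blast
      have "\<not>(\<exists>d. d*d = a*b)"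
      proof
        assume "\<exists>d. d*d = a*b"
        then obtain d where "d*d = a*b" by blast
        hence "(d/c)*(d/c) = a" using c b0 by (intro div_sq_aux) auto
        thus False using 3 unfolding qchar_eq_m1 by blast
      qed
      hence "qchar (a*b) = -1" using a0 b0 unfolding qchar_eq_m1 by simp
      thus ?thesis using 3 by simp
    next
      case 4
      thus ?thesis using nsq_nsq[OF 4] by simp
    qed
  qed
qed

lemma qchar_inverse:
  fixes t :: "'a::{field,finite}"
  assumes "odd CARD('a)"
  shows "qchar (1/t) = qchar t"
proof (cases "t = 0")
  case True thus ?thesis by simp
next
  case False
  have "qchar t * qchar (1/t) = qchar (t * (1/t))" by (rule qchar_mult[OF assms, symmetric])
  also have "... = 1" using False by simp
  moreover have "1/t \<noteq> 0" using False by simp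
  ultimately show ?thesis using qchar_nz[of t] qchar_nz[of "1/t"] False by auto
qed

lemma qchar_sq_eq: "x \<noteq> 0 \<Longrightarrow> qchar x * qchar x = 1"
  using qchar_nz[of x] by auto


lemma vec_prod_sum:
  fixes f :: "'n::finite \<Rightarrow> 'a::finite \<Rightarrow> 'c::comm_semiring_1"
  shows "(\<Sum>m\<in>(UNIV::('a^'n) set). \<Prod>i\<in>UNIV. f i (m$i)) = (\<Prod>i\<in>UNIV. \<Sum>b\<in>UNIV. f i b)"
proof -
  have "(\<Prod>i\<in>UNIV. \<Sum>b\<in>UNIV. f i b) = (\<Sum>g\<in>PiE UNIV (\<lambda>_. UNIV). \<Prod>i\<in>UNIV. f i (g i))"
    by (rule prod_sum_PiE) auto
  also have "\<dots> = (\<Sum>m\<in>(UNIV::('a^'n) set). \<Prod>i\<in>UNIV. f i (m$i))"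
    by (rule sum.reindex_bij_witness[where i=vec_nth and j=vec_lambda])
       (auto simp: vec_lambda_inverse)
  finally show ?thesis by simp
qed

definition dot :: "'a::{field,finite}^'n \<Rightarrow> 'a^'n \<Rightarrow> 'a" where
  "dot m z = (\<Sum>i\<in>UNIV. m$i * z$i)"

definition nrm :: "'a::{field,finite}^'n \<Rightarrow> 'a" where
  "nrm z = (\<Sum>i\<in>UNIV. (z$i)^2)"

lemma qdist_nrm: "qdist x y = nrm (x - y)"
  by (simp add: qdist_def nrm_def)

lemma dot_diff: "dot m u - dot m z = dot m (u - z)"
  by (simp add: dot_def sum_subtractf algebra_simps)

lemma dot_zero_left [simp]: "dot 0 z = 0"
  by (simp add: dot_def)

lemma nrm_zero [simp]: "nrm 0 = 0"
  by (simp add: nrm_def)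

locale addchar =
  fixes psi :: "'a::{field,finite} \<Rightarrow> complex"
  assumes psi_add: "\<And>x y. psi (x + y) = psi x * psi y"
    and psi_norm: "\<And>x. norm (psi x) = 1"
    and psi_nontriv: "\<exists>a. psi a \<noteq> 1"
    and odd_card: "odd CARD('a)"
begin

lemma psi_nz: "psi x \<noteq> 0"
  using psi_norm[of x] by auto

lemma psi_0 [simp]: "psi 0 = 1"
proof -
  have "psi 0 * 1 = psi 0 * psi 0" using psi_add[of 0 0] by simp
  thus ?thesis using psi_nz[of 0] by (metis mult_left_cancel)
qed

lemma psi_neg: "psi (-x) = cnj (psi x)"
proof -
  have "psi (-x) * psi x = 1" using psi_add[of "-x" x] by simp
  moreover have "cnj (psi x) * psi x = 1"
  proof -
    have "psi x * cnj (psi x) = of_real ((norm (psi x))^2)"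
      by (rule complex_norm_square[symmetric])
    thus ?thesis using psi_norm[of x] by (simp add: mult.commute)
  qed
  ultimately show ?thesis using psi_nz[of x] by (metis mult_right_cancel)
qed

lemma psi_diff: "psi (x - y) = psi x * cnj (psi y)"
  using psi_add[of x "-y"] psi_neg[of y] by simp

lemma sum_psi: "(\<Sum>t\<in>UNIV. psi t) = 0"
proof -
  obtain a where a: "psi a \<noteq> 1" using psi_nontriv by blast
  have "(\<Sum>t\<in>UNIV. psi t) = (\<Sum>t\<in>UNIV. psi (a + t))"
    by (rule sum.reindex_bij_witness[where i="\<lambda>t. a + t" and j="\<lambda>t. t - a"]) auto
  also have "\<dots> = psi a * (\<Sum>t\<in>UNIV. psi t)"
    by (simp add: psi_add sum_distrib_left)
  finally have "(1 - psi a) * (\<Sum>t\<in>UNIV. psi t) = 0"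
    by (simp add: algebra_simps)
  thus ?thesis using a by simp
qed

lemma sum_psi_mult: "(\<Sum>t\<in>UNIV. psi (c * t)) = (if c = 0 then of_nat CARD('a) else 0)"
proof (cases "c = 0")
  case True thus ?thesis by simp
next
  case False
  have "(\<Sum>t\<in>UNIV. psi (c * t)) = (\<Sum>t\<in>UNIV. psi t)"
    by (rule sum.reindex_bij_witness[where i="\<lambda>t. t / c" and j="\<lambda>t. c * t"]) (use False in auto)
  thus ?thesis using False sum_psi by simp
qed

lemma sum_psi_mult': "(\<Sum>t\<in>UNIV. psi (t * c)) = (if c = 0 then of_nat CARD('a) else 0)"
  using sum_psi_mult[of c] by (simp add: mult.commute)

lemma psi_sum: "psi (sum f I) = (\<Prod>i\<in>I. psi (f i))"
  by (induction I rule: infinite_finite_induct) (auto simp: psi_add)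

lemma orth_d:
  fixes v :: "'a^'n"
  shows "(\<Sum>m\<in>UNIV. psi (dot m v)) = (if v = 0 then of_nat CARD('a) ^ CARD('n) else 0)"
proof -
  have "(\<Sum>m\<in>UNIV. psi (dot m v)) = (\<Sum>m\<in>(UNIV::('a^'n) set). \<Prod>i\<in>UNIV. psi (m$i * v$i))"
    by (simp add: dot_def psi_sum)
  also have "\<dots> = (\<Prod>i\<in>UNIV. \<Sum>b\<in>UNIV. psi (b * v$i))"
    by (rule vec_prod_sum)
  also have "\<dots> = (\<Prod>i\<in>(UNIV::'n set). if v$i = 0 then of_nat CARD('a) else 0)"
    by (simp add: sum_psi_mult')
  also have "\<dots> = (if v = 0 then of_nat CARD('a) ^ CARD('n) else 0)"
  proof (cases "v = 0")
    case True thus ?thesis by simp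
  next
    case False
    then obtain i where "v$i \<noteq> 0" by (metis vec_eq_iff zero_index)
    hence "(\<Prod>i\<in>(UNIV::'n set). if v$i = 0 then of_nat CARD('a) else (0::complex)) = 0"
      by (intro prod_zero) auto
    thus ?thesis using False by simp
  qed
  finally show ?thesis .
qed

definition gs :: "'a \<Rightarrow> complex" where
  "gs r = (\<Sum>x\<in>UNIV. psi (r * (x * x)))"

definition GG :: complex where
  "GG = (\<Sum>t\<in>UNIV. of_int (qchar t) * psi t)"

lemma gs_fiber:
  assumes "r \<noteq> 0"
  shows "gs r = (\<Sum>t\<in>UNIV. of_int (qchar t) * psi (r * t))"
proof -
  have "gs r = (\<Sum>t\<in>UNIV. of_nat (card {x::'a. x * x = t}) * psi (r * t))"
    unfolding gs_def by (rule sum_fiber)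
  also have "\<dots> = (\<Sum>t\<in>UNIV. (1 + of_int (qchar t)) * psi (r * t))"
  proof (rule sum.cong[OF refl])
    fix t :: 'a
    have "of_nat (card {x::'a. x * x = t}) = (of_int (int (card {x::'a. x * x = t})) :: complex)"
      by simp
    also have "\<dots> = of_int (1 + qchar t)" using card_sqrt[OF odd_card, of t] by simp
    finally show "of_nat (card {x::'a. x * x = t}) * psi (r * t) = (1 + of_int (qchar t)) * psi (r * t)"
      by simp
  qed
  also have "\<dots> = (\<Sum>t\<in>UNIV. psi (r * t)) + (\<Sum>t\<in>UNIV. of_int (qchar t) * psi (r * t))"
    by (simp add: algebra_simps sum.distrib)
  also have "(\<Sum>t\<in>UNIV. psi (r * t)) = 0" using sum_psi_mult[of r] assms by simp
  finally show ?thesis by simp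
qed

lemma gs_eq:
  assumes "r \<noteq> 0"
  shows "gs r = of_int (qchar r) * GG"
proof -
  have "gs r = (\<Sum>t\<in>UNIV. of_int (qchar t) * psi (r * t))" by (rule gs_fiber[OF assms])
  also have "\<dots> = (\<Sum>u\<in>UNIV. of_int (qchar (u / r)) * psi u)"
    by (rule sum.reindex_bij_witness[where i="\<lambda>u. u / r" and j="\<lambda>t. r * t"]) (use assms in auto)
  also have "\<dots> = (\<Sum>u\<in>UNIV. of_int (qchar r) * (of_int (qchar u) * psi u))"
  proof (rule sum.cong[OF refl])
    fix u :: 'a
    have "qchar (u / r) = qchar (u * (1 / r))" by simp
    also have "\<dots> = qchar u * qchar r"
      using qchar_mult[OF odd_card, of u "1/r"] qchar_inverse[OF odd_card, of r] by simp
    finally show "of_int (qchar (u / r)) * psi u = of_int (qchar r) * (of_int (qchar u) * psi u)"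
      by simp
  qed
  also have "\<dots> = of_int (qchar r) * GG"
    by (simp add: GG_def sum_distrib_left)
  finally show ?thesis .
qed

lemma gs_1: "gs 1 = GG"
  using gs_eq[of 1] by simp

end


lemma complete_sq:
  fixes r z m :: "'a::field"
  assumes two: "(2::'a) \<noteq> 0" and r: "r \<noteq> 0"
  shows "r * z^2 - m * z = r * (z - m / (2 * r))^2 - m^2 / (4 * r)"
proof -
  have four: "(4::'a) = 2 * 2" by simp
  have "(4::'a) \<noteq> 0" using two four by (metis mult_eq_0_iff)
  hence r4: "4 * r \<noteq> 0" using r by simp
  define s where "s = m / (2 * r)"
  have m: "m = 2 * r * s" using two r by (simp add: s_def)
  have "m^2 = (4 * r) * (r * s^2)" unfolding m by (simp add: power2_eq_square algebra_simps)
  hence m2: "m^2 / (4 * r) = r * s^2" using r4 by simp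
  have "r * z^2 - m * z = r * (z - s)^2 - r * s^2"
    unfolding m by (simp add: power2_eq_square algebra_simps)
  thus ?thesis using m2 by (simp add: s_def)
qed

context addchar
begin

lemma two_nz: "(2::'a) \<noteq> 0" by (rule two_ne_0[OF odd_card])

lemma card_nz: "(of_nat CARD('a) :: complex) \<noteq> 0" by simp

lemma gs_neg1: "gs (-1) = cnj GG"
proof -
  have "cnj GG = cnj (gs 1)" by (simp add: gs_1)
  also have "\<dots> = (\<Sum>x\<in>UNIV. psi (-(x * x)))" by (simp add: gs_def psi_neg)
  also have "\<dots> = gs (-1)" by (simp add: gs_def)
  finally show ?thesis by simp
qed

lemma gs_prod: "gs 1 * gs (-1) = of_nat CARD('a)"
proof -
  have "gs 1 * gs (-1) = (\<Sum>x\<in>UNIV. \<Sum>y\<in>UNIV. psi (x * x) * psi (-(y * y)))"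
    by (simp add: gs_def sum_product)
  also have "\<dots> = (\<Sum>x\<in>UNIV. \<Sum>y\<in>UNIV. psi (x * x - y * y))"
    by (simp add: psi_add[symmetric])
  also have "\<dots> = (\<Sum>x\<in>UNIV. \<Sum>s\<in>UNIV. psi (x * x - (x + s) * (x + s)))"
  proof (rule sum.cong[OF refl])
    fix x :: 'a
    show "(\<Sum>y\<in>UNIV. psi (x * x - y * y)) = (\<Sum>s\<in>UNIV. psi (x * x - (x + s) * (x + s)))"
      by (rule sum.reindex_bij_witness[where i="\<lambda>s. x + s" and j="\<lambda>y. y - x"]) auto
  qed
  also have "\<dots> = (\<Sum>x\<in>UNIV. \<Sum>s\<in>UNIV. psi (-(s * s)) * psi ((-(2 * s)) * x))"
  proof (intro sum.cong refl)
    fix x s :: 'a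
    have eq: "x * x - (x + s) * (x + s) = -(s * s) + (-(2 * s)) * x"
      by (simp add: algebra_simps mult_2)
    show "psi (x * x - (x + s) * (x + s)) = psi (-(s * s)) * psi ((-(2 * s)) * x)"
      unfolding eq by (rule psi_add)
  qed
  also have "\<dots> = (\<Sum>s\<in>UNIV. \<Sum>x\<in>UNIV. psi (-(s * s)) * psi ((-(2 * s)) * x))"
    by (rule sum.swap)
  also have "\<dots> = (\<Sum>s\<in>UNIV. psi (-(s * s)) * (\<Sum>x\<in>UNIV. psi ((-(2 * s)) * x)))"
    by (simp only: sum_distrib_left)
  also have "\<dots> = (\<Sum>s\<in>UNIV. psi (-(s * s)) * (if -(2 * s) = 0 then of_nat CARD('a) else 0))"
    by (simp only: sum_psi_mult)
  also have "\<dots> = (\<Sum>s\<in>UNIV. if s = (0::'a) then of_nat CARD('a) else 0)"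
  proof (rule sum.cong[OF refl])
    fix s :: 'a
    have "-(2 * s) = 0 \<longleftrightarrow> s = 0" using two_nz by simp
    thus "psi (-(s * s)) * (if -(2 * s) = 0 then of_nat CARD('a) else 0)
          = (if s = 0 then of_nat CARD('a) else (0::complex))" by auto
  qed
  also have "\<dots> = of_nat CARD('a)" by simp
  finally show ?thesis .
qed

lemma GG_cnj: "GG * cnj GG = of_nat CARD('a)"
  using gs_prod by (simp add: gs_1 gs_neg1)

lemma GG_norm2: "(norm GG)^2 = real CARD('a)"
proof -
  have "(of_real ((norm GG)^2) :: complex) = GG * cnj GG" by (rule complex_norm_square)
  also have "\<dots> = of_real (real CARD('a))" using GG_cnj by simp
  finally have "(of_real ((norm GG)^2) :: complex) = of_real (real CARD('a))" .
  thus ?thesis by (simp only: of_real_eq_iff)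
qed

lemma GG_sq: "of_int (qchar (-1::'a)) * GG^2 = of_nat CARD('a)"
proof -
  have "gs (-1) = of_int (qchar (-1::'a)) * GG" by (rule gs_eq) simp
  thus ?thesis using gs_prod by (simp add: gs_1 power2_eq_square algebra_simps)
qed

lemma sum_qchar_neg: "(\<Sum>r\<in>UNIV. qchar (-r::'a)) = 0"
proof -
  have "(\<Sum>r\<in>UNIV. qchar (-r::'a)) = (\<Sum>r\<in>UNIV. qchar (r::'a))"
    by (rule sum.reindex_bij_witness[where i="\<lambda>r. -r" and j="\<lambda>r. -r"]) auto
  thus ?thesis using sum_qchar[OF odd_card] by simp
qed

lemma sum_qchar_neg_c: "(\<Sum>r\<in>UNIV. (of_int (qchar (-r::'a)) :: complex)) = 0"
proof -
  have "(\<Sum>r\<in>UNIV. (of_int (qchar (-r::'a)) :: complex)) = of_int (\<Sum>r\<in>UNIV. qchar (-r::'a))"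
    by simp
  thus ?thesis using sum_qchar_neg by simp
qed

lemma qchar_neg_div:
  fixes u t :: 'a
  assumes "t \<noteq> 0"
  shows "qchar (-(u / t)) = qchar (-1::'a) * qchar u * qchar t"
proof -
  have "-(u / t) = (-1) * u * (1 / t)" by simp
  hence "qchar (-(u / t)) = qchar ((-1) * u * (1 / t))" by simp
  also have "\<dots> = qchar ((-1) * u) * qchar (1/t)"
    by (rule qchar_mult[OF odd_card])
  also have "\<dots> = qchar (-1::'a) * qchar u * qchar (1/t)"
    by (simp only: qchar_mult[OF odd_card, of "-1::'a" u])
  also have "\<dots> = qchar (-1::'a) * qchar u * qchar t"
    by (simp add: qchar_inverse[OF odd_card])
  finally show ?thesis .
qed

lemma qchar_expand:
  "of_int (qchar t) = GG / of_nat CARD('a) * (\<Sum>r\<in>UNIV. of_int (qchar (-r)) * psi (r * t))"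
proof (cases "t = 0")
  case True
  thus ?thesis using sum_qchar_neg_c by simp
next
  case False
  have "(\<Sum>r\<in>UNIV. of_int (qchar (-r)) * psi (r * t)) = (\<Sum>u\<in>UNIV. of_int (qchar (-(u / t))) * psi u)"
    by (rule sum.reindex_bij_witness[where i="\<lambda>u. u / t" and j="\<lambda>r. r * t"]) (use False in auto)
  also have "\<dots> = (\<Sum>u\<in>UNIV. of_int (qchar (-1::'a) * qchar t) * (of_int (qchar u) * psi u))"
    by (rule sum.cong[OF refl]) (simp add: qchar_neg_div[OF False] algebra_simps)
  also have "\<dots> = of_int (qchar (-1::'a) * qchar t) * GG"
    by (simp add: GG_def sum_distrib_left)
  finally have eq: "(\<Sum>r\<in>UNIV. of_int (qchar (-r)) * psi (r * t)) = of_int (qchar (-1::'a) * qchar t) * GG" .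
  have "GG / of_nat CARD('a) * (of_int (qchar (-1::'a) * qchar t) * GG)
        = of_int (qchar t) * (of_int (qchar (-1::'a)) * GG^2) / of_nat CARD('a)"
    by (simp add: power2_eq_square algebra_simps)
  also have "\<dots> = of_int (qchar t)" using GG_sq card_nz by simp
  finally show ?thesis using eq by simp
qed

lemma sum_inv:
  "(\<Sum>r\<in>UNIV. of_int (qchar (-r)) * psi (e / r)) = (if e = 0 then 0 else of_int (qchar (-e)) * GG)"
proof (cases "e = 0")
  case True
  have "(\<Sum>r\<in>UNIV. of_int (qchar (-r)) * psi (e / r)) = (\<Sum>r\<in>UNIV. (of_int (qchar (-r::'a)) :: complex))"
    by (rule sum.cong[OF refl]) (simp add: True)
  also have "\<dots> = 0" by (rule sum_qchar_neg_c)
  finally show ?thesis using True by simp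
next
  case False
  have inv: "e / (e / r) = r" for r
    using False by (cases "r = 0") (simp_all add: field_simps)
  have "(\<Sum>r\<in>UNIV. of_int (qchar (-r)) * psi (e / r)) = (\<Sum>u\<in>UNIV. of_int (qchar (-(e / u))) * psi u)"
    by (rule sum.reindex_bij_witness[where i="\<lambda>u. e / u" and j="\<lambda>r. e / r"]) (use False in \<open>simp_all add: inv\<close>)
  also have "\<dots> = (\<Sum>u\<in>UNIV. of_int (qchar (-e)) * (of_int (qchar u) * psi u))"
  proof (rule sum.cong[OF refl])
    fix u :: 'a
    have "-(e / u) = (-e) * (1 / u)" by simp
    hence "qchar (-(e / u)) = qchar (-e) * qchar (1 / u)" by (simp only: qchar_mult[OF odd_card])
    also have "\<dots> = qchar (-e) * qchar u" by (simp add: qchar_inverse[OF odd_card])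
    finally show "of_int (qchar (-(e / u))) * psi u = of_int (qchar (-e)) * (of_int (qchar u) * psi u)"
      by simp
  qed
  also have "\<dots> = of_int (qchar (-e)) * GG" by (simp add: GG_def sum_distrib_left)
  finally show ?thesis using False by simp
qed

definition CC :: "'a \<Rightarrow> 'a^'n \<Rightarrow> complex" where
  "CC r m = (\<Sum>z\<in>UNIV. psi (r * nrm z - dot m z))"

lemma psi_expand:
  fixes u :: "'a^'n"
  shows "psi (r * nrm u) = (\<Sum>m\<in>UNIV. CC r m * psi (dot m u)) / of_nat CARD('a) ^ CARD('n)"
proof -
  have "(\<Sum>m\<in>UNIV. CC r m * psi (dot m u))
        = (\<Sum>m\<in>UNIV. \<Sum>z\<in>UNIV. psi (r * nrm z) * psi (dot m (u - z)))"
  proof (rule sum.cong[OF refl])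
    fix m :: "'a^'n"
    show "CC r m * psi (dot m u) = (\<Sum>z\<in>UNIV. psi (r * nrm z) * psi (dot m (u - z)))"
      unfolding CC_def sum_distrib_right
    proof (rule sum.cong[OF refl])
      fix z :: "'a^'n"
      have "psi (dot m (u - z)) = psi (dot m u) * cnj (psi (dot m z))"
        by (simp add: dot_diff[symmetric] psi_diff)
      thus "psi (r * nrm z - dot m z) * psi (dot m u) = psi (r * nrm z) * psi (dot m (u - z))"
        by (simp add: psi_diff)
    qed
  qed
  also have "\<dots> = (\<Sum>z\<in>UNIV. \<Sum>m\<in>UNIV. psi (r * nrm z) * psi (dot m (u - z)))"
    by (rule sum.swap)
  also have "\<dots> = (\<Sum>z\<in>UNIV. psi (r * nrm z) * (if u - z = 0 then of_nat CARD('a) ^ CARD('n) else 0))"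
    by (simp add: sum_distrib_left[symmetric] orth_d)
  also have "\<dots> = (\<Sum>z\<in>UNIV. if z = u then psi (r * nrm u) * of_nat CARD('a) ^ CARD('n) else 0)"
    by (rule sum.cong[OF refl]) auto
  also have "\<dots> = psi (r * nrm u) * of_nat CARD('a) ^ CARD('n)"
    by simp
  finally show ?thesis by simp
qed

lemma sum_psi_nrm: "(\<Sum>z\<in>(UNIV::('a^'n) set). psi (r * nrm z)) = gs r ^ CARD('n)"
proof -
  have "(\<Sum>z\<in>(UNIV::('a^'n) set). psi (r * nrm z))
        = (\<Sum>z\<in>(UNIV::('a^'n) set). \<Prod>i\<in>UNIV. psi (r * (z$i * z$i)))"
    by (simp add: nrm_def sum_distrib_left psi_sum power2_eq_square)
  also have "\<dots> = (\<Prod>i\<in>(UNIV::'n set). \<Sum>b\<in>UNIV. psi (r * (b * b)))"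
    by (rule vec_prod_sum)
  also have "\<dots> = gs r ^ CARD('n)" by (simp add: gs_def)
  finally show ?thesis .
qed

lemma CC_eq:
  fixes m :: "'a^'n"
  assumes r: "r \<noteq> 0"
  shows "CC r m = psi (-(nrm m / (4 * r))) * gs r ^ CARD('n)"
proof -
  define w :: "'a^'n" where "w = (\<chi> i. m$i / (2 * r))"
  have key: "r * nrm z - dot m z = r * nrm (z - w) + -(nrm m / (4 * r))" for z :: "'a^'n"
  proof -
    have "r * nrm z - dot m z = (\<Sum>i\<in>UNIV. r * (z$i)^2 - m$i * z$i)"
      by (simp add: nrm_def dot_def sum_distrib_left sum_subtractf)
    also have "\<dots> = (\<Sum>i\<in>UNIV. r * ((z - w)$i)^2 - (m$i)^2 / (4 * r))"
      by (rule sum.cong[OF refl]) (simp add: w_def complete_sq[OF two_nz r])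
    also have "\<dots> = r * nrm (z - w) + -(nrm m / (4 * r))"
      by (simp add: nrm_def sum_distrib_left sum_subtractf sum_divide_distrib)
    finally show ?thesis .
  qed
  have "CC r m = (\<Sum>z\<in>UNIV. psi (-(nrm m / (4 * r))) * psi (r * nrm (z - w)))"
    unfolding CC_def key psi_add by (rule sum.cong[OF refl]) (rule mult.commute)
  also have "\<dots> = psi (-(nrm m / (4 * r))) * (\<Sum>z\<in>UNIV. psi (r * nrm (z - w)))"
    by (simp add: sum_distrib_left)
  also have "(\<Sum>z\<in>UNIV. psi (r * nrm (z - w))) = (\<Sum>z\<in>(UNIV::('a^'n) set). psi (r * nrm z))"
    by (rule sum.reindex_bij_witness[where i="\<lambda>z. z + w" and j="\<lambda>z. z - w"]) auto
  also have "\<dots> = gs r ^ CARD('n)" by (rule sum_psi_nrm)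
  finally show ?thesis .
qed

lemma gs_pow_even:
  assumes "r \<noteq> 0" "even k"
  shows "gs r ^ k = GG ^ k"
proof -
  obtain j where k: "k = 2 * j" using assms(2) by blast
  have "(of_int (qchar r) :: complex)^2 = 1"
    using qchar_nz[OF assms(1)] by (auto simp: power2_eq_square)
  hence "(of_int (qchar r) :: complex)^k = 1" unfolding k by (simp add: power_mult)
  thus ?thesis using gs_eq[OF assms(1)] by (simp add: power_mult_distrib)
qed

end


lemma swap3:
  "(\<Sum>x\<in>A. \<Sum>y\<in>B. \<Sum>r\<in>C. f x y r) = (\<Sum>r\<in>C. \<Sum>x\<in>A. \<Sum>y\<in>B. f x y r)"
proof -
  have "(\<Sum>x\<in>A. \<Sum>y\<in>B. \<Sum>r\<in>C. f x y r) = (\<Sum>x\<in>A. \<Sum>r\<in>C. \<Sum>y\<in>B. f x y r)"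
    by (rule sum.cong[OF refl], rule sum.swap)
  also have "\<dots> = (\<Sum>r\<in>C. \<Sum>x\<in>A. \<Sum>y\<in>B. f x y r)" by (rule sum.swap)
  finally show ?thesis .
qed

context addchar
begin

definition Ah :: "('a^'n) set \<Rightarrow> 'a^'n \<Rightarrow> complex" where
  "Ah A m = (\<Sum>x\<in>A. psi (dot m x))"

lemma P_eq: "(\<Sum>x\<in>A. \<Sum>y\<in>A. psi (dot m (x - y))) = of_real ((norm (Ah A m))^2)"
proof -
  have "(\<Sum>x\<in>A. \<Sum>y\<in>A. psi (dot m (x - y))) = (\<Sum>x\<in>A. \<Sum>y\<in>A. psi (dot m x) * cnj (psi (dot m y)))"
    by (simp add: dot_diff[symmetric] psi_diff)
  also have "\<dots> = Ah A m * cnj (Ah A m)"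
    by (simp add: Ah_def sum_product)
  also have "\<dots> = of_real ((norm (Ah A m))^2)" by (rule complex_norm_square[symmetric])
  finally show ?thesis .
qed

lemma sum_P:
  fixes A :: "('a^'n) set"
  shows "(\<Sum>m\<in>UNIV. \<Sum>x\<in>A. \<Sum>y\<in>A. psi (dot m (x - y))) = of_nat CARD('a) ^ CARD('n) * of_nat (card A)"
proof -
  have "(\<Sum>m\<in>UNIV. \<Sum>x\<in>A. \<Sum>y\<in>A. psi (dot m (x - y))) = (\<Sum>x\<in>A. \<Sum>y\<in>A. \<Sum>m\<in>UNIV. psi (dot m (x - y)))"
    by (rule swap3[symmetric])
  also have "\<dots> = (\<Sum>x\<in>A. \<Sum>y\<in>A. if x = y then of_nat CARD('a) ^ CARD('n) else 0)"
    by (intro sum.cong refl) (simp add: orth_d)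
  also have "\<dots> = (\<Sum>x\<in>A. of_nat CARD('a) ^ CARD('n))"
    by (rule sum.cong[OF refl]) simp
  also have "\<dots> = of_nat CARD('a) ^ CARD('n) * of_nat (card A)" by (simp add: mult.commute)
  finally show ?thesis .
qed

lemma sum_normsq:
  fixes A :: "('a^'n) set"
  shows "(\<Sum>m\<in>UNIV. (norm (Ah A m))^2) = real CARD('a) ^ CARD('n) * real (card A)"
proof -
  have "(of_real (\<Sum>m\<in>UNIV. (norm (Ah A m))^2) :: complex) = (\<Sum>m\<in>UNIV. of_real ((norm (Ah A m))^2))"
    by simp
  also have "\<dots> = (\<Sum>m\<in>UNIV. \<Sum>x\<in>A. \<Sum>y\<in>A. psi (dot m (x - y)))"
    by (simp add: P_eq)
  also have "\<dots> = of_real (real CARD('a) ^ CARD('n) * real (card A))"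
    by (simp add: sum_P)
  finally show ?thesis by (simp only: of_real_eq_iff)
qed

lemma Ah_0: "Ah A 0 = of_nat (card A)"
  by (simp add: Ah_def)

definition KK :: "'a^'n \<Rightarrow> complex" where
  "KK m = (if nrm m = 0 then 0 else of_int (qchar (nrm m / 4)) * GG)"

lemma KK_eq: "(\<Sum>r\<in>UNIV. of_int (qchar (-r)) * psi (-(nrm m / (4 * r)))) = KK m"
proof -
  have "(\<Sum>r\<in>UNIV. of_int (qchar (-r)) * psi (-(nrm m / (4 * r))))
        = (\<Sum>r\<in>UNIV. of_int (qchar (-r)) * psi ((-(nrm m) / 4) / r))"
    by (simp add: divide_divide_eq_left)
  also have "\<dots> = (if -(nrm m) / 4 = 0 then 0 else of_int (qchar (-(-(nrm m) / 4))) * GG)"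
    by (rule sum_inv)
  also have "\<dots> = KK m"
  proof -
    have "(4::'a) \<noteq> 0" using two_nz by (metis mult_eq_0_iff numeral_Bit0_eq_double mult_2)
    hence "-(nrm m) / 4 = 0 \<longleftrightarrow> nrm m = 0" by simp
    moreover have "-(-(nrm m) / 4) = nrm m / 4" by simp
    ultimately show ?thesis by (simp add: KK_def)
  qed
  finally show ?thesis .
qed

lemma S_eq:
  fixes A :: "('a^'n) set"
  assumes r: "r \<noteq> 0" and ev: "even CARD('n)"
  shows "(\<Sum>x\<in>A. \<Sum>y\<in>A. psi (r * nrm (x - y)))
       = GG ^ CARD('n) / of_nat CARD('a) ^ CARD('n) *
         (\<Sum>m\<in>UNIV. psi (-(nrm m / (4 * r))) * (\<Sum>x\<in>A. \<Sum>y\<in>A. psi (dot m (x - y))))"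
proof -
  let ?D = "(of_nat CARD('a) ^ CARD('n) :: complex)"
  have "(\<Sum>x\<in>A. \<Sum>y\<in>A. psi (r * nrm (x - y)))
        = (\<Sum>x\<in>A. \<Sum>y\<in>A. (\<Sum>m\<in>UNIV. CC r m * psi (dot m (x - y))) / ?D)"
    by (simp add: psi_expand[symmetric])
  also have "\<dots> = (\<Sum>x\<in>A. \<Sum>y\<in>A. \<Sum>m\<in>UNIV. CC r m * psi (dot m (x - y))) / ?D"
    by (simp add: sum_divide_distrib)
  also have "(\<Sum>x\<in>A. \<Sum>y\<in>A. \<Sum>m\<in>UNIV. CC r m * psi (dot m (x - y)))
             = (\<Sum>m\<in>UNIV. \<Sum>x\<in>A. \<Sum>y\<in>A. CC r m * psi (dot m (x - y)))"
    by (rule swap3)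
  also have "\<dots> = (\<Sum>m\<in>UNIV. CC r m * (\<Sum>x\<in>A. \<Sum>y\<in>A. psi (dot m (x - y))))"
    by (simp only: sum_distrib_left)
  also have "\<dots> = (\<Sum>m\<in>UNIV. (psi (-(nrm m / (4 * r))) * GG ^ CARD('n)) * (\<Sum>x\<in>A. \<Sum>y\<in>A. psi (dot m (x - y))))"
    by (rule sum.cong[OF refl]) (simp only: CC_eq[OF r] gs_pow_even[OF r ev])
  also have "\<dots> = GG ^ CARD('n) * (\<Sum>m\<in>UNIV. psi (-(nrm m / (4 * r))) * (\<Sum>x\<in>A. \<Sum>y\<in>A. psi (dot m (x - y))))"
    by (simp add: sum_distrib_left mult_ac)
  finally show ?thesis by simp
qed

end


lemma sum_rearr:
  fixes a :: "'r \<Rightarrow> complex"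
  shows "(\<Sum>r\<in>R. a r * (c * (\<Sum>m\<in>M. p m r * P m))) = c * (\<Sum>m\<in>M. P m * (\<Sum>r\<in>R. a r * p m r))"
proof -
  have "(\<Sum>r\<in>R. a r * (c * (\<Sum>m\<in>M. p m r * P m))) = (\<Sum>r\<in>R. \<Sum>m\<in>M. c * (P m * (a r * p m r)))"
    by (simp add: sum_distrib_left mult_ac)
  also have "\<dots> = (\<Sum>m\<in>M. \<Sum>r\<in>R. c * (P m * (a r * p m r)))" by (rule sum.swap)
  also have "\<dots> = c * (\<Sum>m\<in>M. P m * (\<Sum>r\<in>R. a r * p m r))" by (simp add: sum_distrib_left mult_ac)
  finally show ?thesis .
qed

context addchar
begin

lemma T_formula:
  fixes A :: "('a^'n) set"
  assumes ev: "even CARD('n)"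
  shows "(\<Sum>x\<in>A. \<Sum>y\<in>A. (of_int (qchar (qdist x y)) :: complex))
       = GG ^ (CARD('n) + 1) / of_nat CARD('a) ^ (CARD('n) + 1) * (\<Sum>m\<in>UNIV. of_real ((norm (Ah A m))^2) * KK m)"
proof -
  let ?Q = "(of_nat CARD('a) :: complex)"
  let ?P = "\<lambda>m. (\<Sum>x\<in>A. \<Sum>y\<in>A. psi (dot m (x - y)))"
  let ?S = "\<lambda>r. (\<Sum>x\<in>A. \<Sum>y\<in>A. psi (r * nrm (x - y)))"
  have "(\<Sum>x\<in>A. \<Sum>y\<in>A. (of_int (qchar (qdist x y)) :: complex))
        = (\<Sum>x\<in>A. \<Sum>y\<in>A. GG / ?Q * (\<Sum>r\<in>UNIV. of_int (qchar (-r)) * psi (r * nrm (x - y))))"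
  proof (intro sum.cong refl)
    fix x y :: "'a^'n"
    show "(of_int (qchar (qdist x y)) :: complex) = GG / ?Q * (\<Sum>r\<in>UNIV. of_int (qchar (-r)) * psi (r * nrm (x - y)))"
      using qchar_expand[of "qdist x y"] by (simp only: qdist_nrm)
  qed
  also have "\<dots> = GG / ?Q * (\<Sum>x\<in>A. \<Sum>y\<in>A. \<Sum>r\<in>UNIV. of_int (qchar (-r)) * psi (r * nrm (x - y)))"
    by (simp only: sum_distrib_left)
  also have "(\<Sum>x\<in>A. \<Sum>y\<in>A. \<Sum>r\<in>UNIV. of_int (qchar (-r)) * psi (r * nrm (x - y)))
     = (\<Sum>r\<in>UNIV. \<Sum>x\<in>A. \<Sum>y\<in>A. (of_int (qchar (-r)) * psi (r * nrm (x - y)) :: complex))"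
    by (rule swap3)
  also have "\<dots> = (\<Sum>r\<in>UNIV. of_int (qchar (-r)) * ?S r)"
    by (simp only: sum_distrib_left)
  also have "(\<Sum>r\<in>UNIV. of_int (qchar (-r)) * ?S r)
      = (\<Sum>r\<in>UNIV. of_int (qchar (-r)) * (GG ^ CARD('n) / ?Q ^ CARD('n) * (\<Sum>m\<in>UNIV. psi (-(nrm m / (4 * r))) * ?P m)))"
  proof (rule sum.cong[OF refl])
    fix r :: 'a
    show "of_int (qchar (-r)) * ?S r
      = of_int (qchar (-r)) * (GG ^ CARD('n) / ?Q ^ CARD('n) * (\<Sum>m\<in>UNIV. psi (-(nrm m / (4 * r))) * ?P m))"
    proof (cases "r = 0")
      case True thus ?thesis by simp
    next
      case False thus ?thesis by (simp only: S_eq[OF False ev])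
    qed
  qed
  also have "\<dots> = GG ^ CARD('n) / ?Q ^ CARD('n) * (\<Sum>m\<in>UNIV. ?P m * (\<Sum>r\<in>UNIV. of_int (qchar (-r)) * psi (-(nrm m / (4 * r)))))"
    by (rule sum_rearr)
  also have "\<dots> = GG ^ CARD('n) / ?Q ^ CARD('n) * (\<Sum>m\<in>UNIV. of_real ((norm (Ah A m))^2) * KK m)"
    by (simp only: KK_eq P_eq)
  finally show ?thesis by (simp add: field_simps)
qed

lemma norm_KK: "norm (KK m) \<le> (if m = 0 then 0 else norm GG)"
proof (cases "m = 0")
  case True thus ?thesis by (simp add: KK_def)
next
  case False
  have "norm (of_int (qchar x) :: complex) \<le> 1" for x :: 'a
    using qchar_cases[of x] by auto
  hence "norm (of_int (qchar (nrm m / 4)) * GG) \<le> 1 * norm GG"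
    unfolding norm_mult by (intro mult_right_mono) auto
  thus ?thesis using False by (simp add: KK_def)
qed

lemma T_bound:
  fixes A :: "('a^'n) set"
  assumes ev: "even CARD('n)"
  shows "norm (\<Sum>x\<in>A. \<Sum>y\<in>A. (of_int (qchar (qdist x y)) :: complex))
         \<le> real CARD('a) ^ (CARD('n) div 2) * real (card A) - (real (card A))^2 / real CARD('a) ^ (CARD('n) div 2)"
proof -
  define q where "q = real CARD('a)"
  define a where "a = real (card A)"
  define g where "g = norm GG"
  define d where "d = CARD('n)"
  define k where "k = d div 2"
  have d2: "d = 2 * k" using ev by (simp add: k_def d_def)
  have q0: "q > 0" by (simp add: q_def)
  have g2: "g^2 = q" by (simp add: g_def q_def GG_norm2)
  have g0: "g \<ge> 0" by (simp add: g_def)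
  let ?nA = "\<lambda>m. (norm (Ah A m))^2"
  have s1: "norm (\<Sum>m\<in>UNIV. of_real (?nA m) * KK m) \<le> (\<Sum>m\<in>UNIV. ?nA m * (if m = 0 then 0 else g))"
  proof -
    have "norm (\<Sum>m\<in>UNIV. of_real (?nA m) * KK m) \<le> (\<Sum>m\<in>UNIV. norm (of_real (?nA m) * KK m))"
      by (rule norm_sum)
    also have "\<dots> \<le> (\<Sum>m\<in>UNIV. ?nA m * (if m = 0 then 0 else g))"
    proof (rule sum_mono)
      fix m :: "'a^'n"
      have "norm (of_real (?nA m) * KK m) = ?nA m * norm (KK m)"
        by (simp add: norm_mult norm_power)
      also have "\<dots> \<le> ?nA m * (if m = 0 then 0 else g)"
        using norm_KK[of m] unfolding g_def by (intro mult_left_mono) auto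
      finally show "norm (of_real (?nA m) * KK m) \<le> ?nA m * (if m = 0 then 0 else g)" .
    qed
    finally show ?thesis .
  qed
  have s2: "(\<Sum>m\<in>UNIV. ?nA m * (if m = 0 then 0 else g)) = g * (q ^ d * a - a^2)"
  proof -
    have "(\<Sum>m\<in>UNIV. ?nA m * (if m = 0 then 0 else g))
          = (\<Sum>m\<in>UNIV. g * ?nA m - (if m = 0 then g * ?nA m else 0))"
      by (rule sum.cong[OF refl]) simp
    also have "\<dots> = g * (\<Sum>m\<in>UNIV. ?nA m) - g * ?nA 0"
      by (simp add: sum_subtractf sum_distrib_left)
    also have "\<dots> = g * (q ^ d * a - a^2)"
      by (simp add: sum_normsq Ah_0 q_def a_def d_def algebra_simps)
    finally show ?thesis .
  qed
  have "norm (\<Sum>x\<in>A. \<Sum>y\<in>A. (of_int (qchar (qdist x y)) :: complex))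
        = g ^ (d + 1) / q ^ (d + 1) * norm (\<Sum>m\<in>UNIV. of_real (?nA m) * KK m)"
    unfolding T_formula[OF ev] by (simp add: norm_mult norm_divide norm_power g_def q_def d_def)
  also have "\<dots> \<le> g ^ (d + 1) / q ^ (d + 1) * (g * (q ^ d * a - a^2))"
    using s1 s2 q0 g0 by (intro mult_left_mono) auto
  also have "\<dots> = (g ^ (d + 1) * g) / q ^ (d + 1) * (q ^ d * a - a^2)"
    by simp
  also have "g ^ (d + 1) * g = (g^2) ^ (k + 1)"
  proof -
    have "g ^ (d + 1) * g = g ^ (2 * (k + 1))" by (simp add: d2)
    also have "\<dots> = (g^2) ^ (k + 1)" by (rule power_mult)
    finally show ?thesis .
  qed
  also have "(g^2) ^ (k + 1) / q ^ (d + 1) * (q ^ d * a - a^2) = q ^ k * a - a^2 / q ^ k"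
  proof -
    have e2: "q ^ d = q ^ k * q ^ k" by (simp add: d2 mult_2 power_add)
    have e3: "q ^ (d + 1) = q ^ k * q ^ k * q" by (simp add: d2 mult_2 power_add)
    have e1: "(g^2) ^ (k + 1) = q ^ k * q" by (simp add: g2)
    have qk: "q ^ k > 0" using q0 by simp
    show ?thesis unfolding e1 e2 e3 using qk q0 by (simp add: field_simps power2_eq_square)
  qed
  finally show ?thesis by (simp add: q_def a_def k_def d_def)
qed

end


lemma of_nat_mod_CHAR: "(of_nat (n mod CHAR('a)) :: 'a::comm_ring_1) = of_nat n"
proof -
  have "n = CHAR('a) * (n div CHAR('a)) + n mod CHAR('a)" by simp
  hence "(of_nat n::'a) = of_nat (CHAR('a)) * of_nat (n div CHAR('a)) + of_nat (n mod CHAR('a))"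
    by (metis of_nat_add of_nat_mult)
  thus ?thesis by simp
qed

definition sg :: "'a::comm_ring_1 set \<Rightarrow> bool" where
  "sg H \<longleftrightarrow> 0 \<in> H \<and> (\<forall>x\<in>H. \<forall>y\<in>H. x + y \<in> H)"

lemma sg_mult:
  assumes "sg H" "x \<in> H"
  shows "of_nat k * x \<in> H"
proof (induction k)
  case 0 thus ?case using assms by (simp add: sg_def)
next
  case (Suc k)
  have "of_nat (Suc k) * x = x + of_nat k * x" by (simp add: algebra_simps)
  thus ?case using Suc assms by (simp add: sg_def)
qed

lemma sg_neg:
  fixes H :: "'a::comm_ring_1 set"
  assumes "sg H" "x \<in> H" "CHAR('a) > 0"
  shows "-x \<in> H"
proof -
  have "of_nat (CHAR('a) - 1) * x + x = of_nat CHAR('a) * x"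
    using assms(3) by (simp add: algebra_simps of_nat_diff)
  also have "\<dots> = 0" by simp
  finally have "of_nat (CHAR('a) - 1) * x = -x" by (simp add: add_eq_0_iff2)
  thus ?thesis using sg_mult[OF assms(1,2)] by metis
qed

lemma sg_diff:
  fixes H :: "'a::comm_ring_1 set"
  assumes "sg H" "x \<in> H" "y \<in> H" "CHAR('a) > 0"
  shows "x - y \<in> H"
proof -
  have "-y \<in> H" using sg_neg[OF assms(1,3,4)] .
  hence "x + -y \<in> H" using assms(1,2) unfolding sg_def by blast
  thus ?thesis by (simp only: diff_conv_add_uminus)
qed

lemma aux_real: "(P::real) > 0 \<Longrightarrow> 2 * pi * (N - P * D) / P = 2 * pi * N / P - 2 * pi * D"
  by (simp add: field_simps)

lemma exists_addchar:
  assumes odd: "odd CARD('a::{field,finite})"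
  shows "\<exists>psi::'a \<Rightarrow> complex. (\<forall>x y. psi (x + y) = psi x * psi y) \<and> (\<forall>x. norm (psi x) = 1) \<and> (\<exists>a. psi a \<noteq> 1)"
proof -
  define p where "p = CHAR('a)"
  have p0: "p > 0" unfolding p_def by (rule finite_imp_CHAR_pos) simp
  have pprime: "prime p" unfolding p_def by (rule prime_CHAR_semidom) (simp add: p0[unfolded p_def])
  have "p dvd CARD('a)" unfolding p_def using of_nat_card_eq_0[where 'a='a] of_nat_eq_0_iff_char_dvd by blast
  hence "odd p" using odd by (metis dvd_trans)
  hence p3: "p \<ge> 3" using prime_ge_2_nat[OF pprime] by (metis le_antisym not_less_eq_eq numeral_2_eq_2 numeral_3_eq_3 even_numeral)
  define S where "S = {H::'a set. sg H \<and> H \<noteq> UNIV}"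
  have finS: "finite S" by simp
  have "{0::'a} \<noteq> UNIV"
  proof
    assume "{0::'a} = UNIV"
    hence "(1::'a) \<in> {0}" by simp
    thus False by simp
  qed
  hence "{0} \<in> S" unfolding S_def sg_def by simp
  hence Sne: "S \<noteq> {}" by blast
  define M where "M = Max (card ` S)"
  have "M \<in> card ` S" unfolding M_def using finS Sne by (intro Max_in) auto
  then obtain H where H: "H \<in> S" "card H = M" by blast
  have Hmax: "card H' \<le> card H" if "H' \<in> S" for H'
    unfolding H(2) M_def using finS that by (intro Max_ge) auto
  have sgH: "sg H" and HU: "H \<noteq> UNIV" using H(1) by (auto simp: S_def)
  obtain g where g: "g \<notin> H" using HU by blast
  define H' where "H' = {h + of_nat k * g | h k. h \<in> H}"
  have sgH': "sg H'"
    unfolding sg_def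
  proof (intro conjI ballI)
    show "0 \<in> H'" unfolding H'_def using sgH by (auto simp: sg_def intro!: exI[of _ 0])
  next
    fix x y assume "x \<in> H'" "y \<in> H'"
    then obtain h1 k1 h2 k2 where "x = h1 + of_nat k1 * g" "h1 \<in> H" "y = h2 + of_nat k2 * g" "h2 \<in> H"
      unfolding H'_def by blast
    moreover have "h1 + h2 \<in> H" using sgH \<open>h1 \<in> H\<close> \<open>h2 \<in> H\<close> by (simp add: sg_def)
    moreover have "x + y = (h1 + h2) + of_nat (k1 + k2) * g" using calculation by (simp add: algebra_simps)
    ultimately show "x + y \<in> H'" unfolding H'_def by blast
  qed
  have "H \<subseteq> H'"
  proof
    fix x assume "x \<in> H"
    moreover have "x = x + of_nat 0 * g" by simp
    ultimately show "x \<in> H'" unfolding H'_def by blast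
  qed
  moreover have "g \<in> H'"
  proof -
    have "0 \<in> H" using sgH by (simp add: sg_def)
    moreover have "g = 0 + of_nat 1 * g" by simp
    ultimately show ?thesis unfolding H'_def by blast
  qed
  ultimately have "H \<subset> H'" using g by blast
  hence "card H < card H'" by (intro psubset_card_mono) simp
  hence "H' \<notin> S" using Hmax by fastforce
  hence H'U: "H' = UNIV" using sgH' by (simp add: S_def)
  have ex: "\<exists>k<p. x - of_nat k * g \<in> H" for x :: 'a
  proof -
    have "x \<in> H'" using H'U by simp
    then obtain h k where hk: "x = h + of_nat k * g" "h \<in> H" unfolding H'_def by blast
    have "(of_nat (k mod p) :: 'a) = of_nat k" unfolding p_def by (rule of_nat_mod_CHAR)
    hence "x - of_nat (k mod p) * g = h" using hk by simp
    thus ?thesis using hk p0 by (intro exI[of _ "k mod p"]) auto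
  qed
  have uniq: "k1 = k2" if "k1 < p" "k2 < p" "x - of_nat k1 * g \<in> H" "x - of_nat k2 * g \<in> H" for x k1 k2
  proof (rule ccontr)
    assume ne: "k1 \<noteq> k2"
    have main: "False" if "a < b" "b < p" "x - of_nat a * g \<in> H" "x - of_nat b * g \<in> H" for a b
    proof -
      have "(x - of_nat a * g) - (x - of_nat b * g) \<in> H"
        using sg_diff[OF sgH that(3,4)] p0 unfolding p_def by simp
      moreover have "(x - of_nat a * g) - (x - of_nat b * g) = of_nat (b - a) * g"
        using that(1) by (simp add: of_nat_diff algebra_simps)
      ultimately have jH: "of_nat (b - a) * g \<in> H" by simp
      have "coprime (b - a) p"
        using pprime that by (intro prime_imp_coprime_nat[THEN coprime_commute[THEN iffD1]] ) (auto dest: dvd_imp_le)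
      hence "gcd (b - a) p = 1" by simp
      moreover have "b - a \<noteq> 0" using that by simp
      ultimately obtain i y where i: "(b - a) * i = p * y + 1" using bezout_nat[of "b - a" p] by auto
      have "(of_nat ((b - a) * i) :: 'a) = of_nat p * of_nat y + 1" unfolding i by simp
      also have "\<dots> = 1" unfolding p_def by simp
      finally have one: "(of_nat ((b - a) * i) :: 'a) = 1" .
      have "of_nat i * (of_nat (b - a) * g) \<in> H" by (rule sg_mult[OF sgH jH])
      moreover have "of_nat i * (of_nat (b - a) * g) = g"
      proof -
        have "of_nat i * (of_nat (b - a) * g) = (of_nat ((b - a) * i) :: 'a) * g"
          by (simp only: of_nat_mult mult_ac)
        thus ?thesis using one by (metis mult_1)
      qed
      ultimately show False using g by simp
    qed
    show False
    proof (cases "k1 < k2")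
      case True thus False using main[OF True that(2) that(3,4)] by blast
    next
      case False
      hence "k2 < k1" using ne by simp
      thus False using main[OF _ that(1) that(4,3)] by blast
    qed
  qed
  define L where "L x = (THE k. k < p \<and> x - of_nat k * g \<in> H)" for x
  have L: "L x < p \<and> x - of_nat (L x) * g \<in> H" for x
  proof -
    obtain k where k: "k < p" "x - of_nat k * g \<in> H" using ex[of x] by blast
    have "L x = k" unfolding L_def
      by (rule the_equality) (use k uniq in blast)+
    thus ?thesis using k by simp
  qed
  have Luniq: "L x = k" if "k < p" "x - of_nat k * g \<in> H" for x k
    using uniq[OF _ that(1) _ that(2)] L[of x] by blast
  have Ladd: "L (x + y) = (L x + L y) mod p" for x y
  proof (rule Luniq)
    show "(L x + L y) mod p < p" using p0 by simp
    have "(of_nat ((L x + L y) mod p) :: 'a) = of_nat (L x + L y)"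
      unfolding p_def by (rule of_nat_mod_CHAR)
    hence "x + y - of_nat ((L x + L y) mod p) * g = (x - of_nat (L x) * g) + (y - of_nat (L y) * g)"
      by (simp add: algebra_simps)
    moreover have "(x - of_nat (L x) * g) + (y - of_nat (L y) * g) \<in> H"
      using L[of x] L[of y] sgH by (simp add: sg_def)
    ultimately show "x + y - of_nat ((L x + L y) mod p) * g \<in> H" by metis
  qed
  have Lg: "L g = 1"
    by (rule Luniq) (use p3 sgH in \<open>auto simp: sg_def\<close>)
  define psi where "psi x = cis (2 * pi * real (L x) / real p)" for x
  have "psi (x + y) = psi x * psi y" for x y
  proof -
    let ?n = "L x + L y"
    have "real (?n mod p) = real ?n - real p * real (?n div p)"
      by (metis add_diff_cancel_left' div_mult_mod_eq of_nat_add of_nat_mult mult.commute)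
    hence "2 * pi * real (?n mod p) / real p = 2 * pi * (real ?n - real p * real (?n div p)) / real p"
      by simp
    also have "\<dots> = 2 * pi * real ?n / real p - 2 * pi * real (?n div p)"
      by (rule aux_real) (use p0 in simp)
    finally have "2 * pi * real (?n mod p) / real p = 2 * pi * real ?n / real p - 2 * pi * real (?n div p)" .
    hence "psi (x + y) = cis (2 * pi * real ?n / real p - 2 * pi * real (?n div p))"
      unfolding psi_def Ladd by simp
    also have "\<dots> = cis (2 * pi * real ?n / real p) * cis (-(2 * pi * real (?n div p)))"
      by (simp add: cis_mult)
    also have "cis (-(2 * pi * real (?n div p))) = 1"
    proof -
      have "cis (2 * pi * real (?n div p)) = 1" by (rule cis_multiple_2pi) simp
      thus ?thesis by (simp add: cis_inverse[symmetric] del: cis_inverse)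
    qed
    also have "cis (2 * pi * real ?n / real p) = psi x * psi y"
      unfolding psi_def by (simp add: cis_mult add_divide_distrib algebra_simps)
    finally show ?thesis by simp
  qed
  moreover have "norm (psi x) = 1" for x by (simp add: psi_def)
  moreover have "psi g \<noteq> 1"
  proof
    assume "psi g = 1"
    moreover have "Im (psi g) = sin (2 * pi / real p)" unfolding psi_def Lg by simp
    ultimately have "sin (2 * pi / real p) = 0" by simp
    moreover have "sin (2 * pi / real p) > 0"
    proof (rule sin_gt_zero)
      show "0 < 2 * pi / real p" using p0 by simp
      have "real p \<ge> 3" using p3 by simp
      hence "2 * pi / real p \<le> 2 * pi / 3" by (intro divide_left_mono) auto
      also have "\<dots> < pi" by simp
      finally show "2 * pi / real p < pi" .
    qed
    ultimately show False by simp
  qed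
  ultimately show ?thesis by blast
qed


lemma count_part:
  fixes A :: "('a::{field,finite} ^ 'n) set"
  defines "S1 \<equiv> {(x, y). x \<in> A \<and> y \<in> A \<and> qchar (qdist x y) = 1}"
      and "S2 \<equiv> {(x, y). x \<in> A \<and> y \<in> A \<and> qchar (qdist x y) = -1}"
  shows "(\<Sum>x\<in>A. \<Sum>y\<in>A. real_of_int (qchar (qdist x y))) = real (card S1) - real (card S2)"
    and "card S1 + card S2 \<le> card A * card A - card A"
proof -
  have fin: "finite (A \<times> A)" by simp
  have "(\<Sum>x\<in>A. \<Sum>y\<in>A. real_of_int (qchar (qdist x y))) = (\<Sum>p\<in>A \<times> A. real_of_int (qchar (qdist (fst p) (snd p))))"
    by (simp add: sum.cartesian_product case_prod_beta)
  also have "\<dots> = (\<Sum>p\<in>A \<times> A. (if qchar (qdist (fst p) (snd p)) = 1 then 1 else 0)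
                   - (if qchar (qdist (fst p) (snd p)) = -1 then 1 else 0))"
    by (rule sum.cong[OF refl]) (use qchar_cases in auto)
  also have "\<dots> = real (card {p \<in> A \<times> A. qchar (qdist (fst p) (snd p)) = 1})
                 - real (card {p \<in> A \<times> A. qchar (qdist (fst p) (snd p)) = -1})"
    by (simp add: sum_subtractf sum.inter_filter[symmetric])
  also have "{p \<in> A \<times> A. qchar (qdist (fst p) (snd p)) = 1} = S1" by (auto simp: S1_def)
  also have "{p \<in> A \<times> A. qchar (qdist (fst p) (snd p)) = -1} = S2" by (auto simp: S2_def)
  finally show "(\<Sum>x\<in>A. \<Sum>y\<in>A. real_of_int (qchar (qdist x y))) = real (card S1) - real (card S2)" .
  define Dg where "Dg = (\<lambda>x. (x, x)) ` A"
  have "S1 \<union> S2 \<subseteq> A \<times> A - Dg"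
    by (auto simp: S1_def S2_def Dg_def qdist_def)
  moreover have "S1 \<inter> S2 = {}" by (auto simp: S1_def S2_def)
  moreover have "finite S1" "finite S2" by simp_all
  ultimately have "card S1 + card S2 \<le> card (A \<times> A - Dg)"
    using card_Un_disjoint[of S1 S2] card_mono[of "A \<times> A - Dg" "S1 \<union> S2"] by simp
  also have "card (A \<times> A - Dg) = card A * card A - card A"
  proof -
    have "Dg \<subseteq> A \<times> A" by (auto simp: Dg_def)
    hence "card (A \<times> A - Dg) = card (A \<times> A) - card Dg" by (intro card_Diff_subset) (auto intro: finite_subset)
    moreover have "card Dg = card A" unfolding Dg_def by (rule card_image) (auto intro: inj_onI)
    ultimately show ?thesis by (simp add: card_cartesian_product)
  qed
  finally show "card S1 + card S2 \<le> card A * card A - card A" .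
qed

lemma half_le: "2 * c \<le> (X::real) \<Longrightarrow> c \<le> X / 2" by linarith

theorem lemma6p1:
  fixes A :: "('a::{field,finite} ^ 'n) set"
  assumes "odd (CARD('a))"
    and "even (CARD('n))" and "CARD('n) \<ge> 2"
  shows "real (SQ A) \<le> real (card A)^2 / 2
           + real (CARD('a)) ^ (CARD('n) div 2) / 2 * real (card A)
           - real (card A)^2 / (2 * real (CARD('a)) ^ (CARD('n) div 2))
           - real (card A) / 2"
proof -
  obtain psi :: "'a \<Rightarrow> complex" where psi: "\<forall>x y. psi (x + y) = psi x * psi y" "\<forall>x. norm (psi x) = 1" "\<exists>a. psi a \<noteq> 1"
    using exists_addchar[OF assms(1)] by blast
  interpret addchar psi
    by standard (use psi assms(1) in auto)
  define Tr where "Tr = (\<Sum>x\<in>A. \<Sum>y\<in>A. real_of_int (qchar (qdist x y)))"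
  define s where "s = real (CARD('a)) ^ (CARD('n) div 2)"
  define a where "a = real (card A)"
  have s0: "s > 0" by (simp add: s_def)
  have "(\<Sum>x\<in>A. \<Sum>y\<in>A. (of_int (qchar (qdist x y)) :: complex)) = of_real Tr"
    by (simp add: Tr_def)
  hence "norm (of_real Tr :: complex) \<le> s * a - a^2 / s"
    using T_bound[OF assms(2), of A] by (simp add: s_def a_def)
  hence Tb: "Tr \<le> s * a - a^2 / s" by simp
  define S1 where "S1 = {(x, y). x \<in> A \<and> y \<in> A \<and> qchar (qdist x y) = 1}"
  define S2 where "S2 = {(x, y). x \<in> A \<and> y \<in> A \<and> qchar (qdist x y) = -1}"
  have c1: "Tr = real (card S1) - real (card S2)"
    unfolding Tr_def S1_def S2_def by (rule count_part(1))
  have c2: "card S1 + card S2 \<le> card A * card A - card A"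
    unfolding S1_def S2_def by (rule count_part(2))
  have "card A \<le> card A * card A" by (cases "card A") auto
  hence c2': "real (card S1) + real (card S2) \<le> a * a - a"
    using c2 unfolding a_def by (metis of_nat_add of_nat_diff of_nat_le_iff of_nat_mult)
  have sq: "SQ A = card S1" by (simp add: SQ_def S1_def)
  have "2 * real (card S1) \<le> (a * a - a) + (s * a - a^2 / s)"
    using c1 c2' Tb by linarith
  hence "real (SQ A) \<le> ((a * a - a) + (s * a - a^2 / s)) / 2"
    unfolding sq by (rule half_le)
  also have "\<dots> = a^2 / 2 + s / 2 * a - a^2 / (2 * s) - a / 2"
    using s0 by (simp add: field_simps power2_eq_square)
  finally have "real (SQ A) \<le> a^2 / 2 + s / 2 * a - a^2 / (2 * s) - a / 2" .
  thus ?thesis by (simp add: s_def a_def)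
qed


end
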